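(* For every integer $n\ge 1$, the hexagonal stacked prism $Y_{6,n}$ is odd prime.
   Context: All graphs are finite and simple. A graph $G$ of order $N$ is odd prime if there is a bijection $\ell:V(G)\to\{1,3,\ldots,2N-1\}$ with $\gcd(\ell(u),\ell(v))=1$ for every edge $uv$. For $k\ge 3$, $n\ge 1$, the stacked prism $Y_{k,n}$ is the Cartesian product $C_k\,\square\,P_n$ of a $k$-cycle and a path on $n$ vertices: vertices $v_{i,j}$ ($1\le i\le n$, $1\le j\le k$), with edges $v_{i,j}v_{i,j+1}$ ($1\le j\le k-1$), $v_{i,k}v_{i,1}$ for each $i$, and $v_{i,j}v_{i+1,j}$ for $1\le i\le n-1$, $1\le j\le k$. *)

theory Defs
  imports Main
begin

definition odd_prime_graph :: "'a set \<Rightarrow> ('a \<Rightarrow> 'a \<Rightarrow> bool) \<Rightarrow> bool" where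
  "odd_prime_graph V E \<longleftrightarrow>
     (\<exists>l :: 'a \<Rightarrow> nat. bij_betw l V {m. odd m \<and> m \<le> 2 * card V - 1} \<and>
        (\<forall>u\<in>V. \<forall>v\<in>V. E u v \<longrightarrow> gcd (l u) (l v) = 1))"

text \<open>Stacked prism Y_{k,n} = C_k \<box> P_n: vertex (i,j) stands for v_{i,j},
  1 \<le> i \<le> n, 1 \<le> j \<le> k.\<close>

definition prism_vertices :: "nat \<Rightarrow> nat \<Rightarrow> (nat \<times> nat) set" where
  "prism_vertices k n = {1..n} \<times> {1..k}"

definition prism_edge_dir :: "nat \<Rightarrow> nat \<Rightarrow> nat \<times> nat \<Rightarrow> nat \<times> nat \<Rightarrow> bool" where
  "prism_edge_dir k n a b \<longleftrightarrow>
     (case (a, b) of ((i, j), (i', j')) \<Rightarrow>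
        1 \<le> i \<and> i \<le> n \<and> 1 \<le> j \<and> j \<le> k \<and>
        ((i' = i \<and> 1 \<le> j \<and> j \<le> k - 1 \<and> j' = j + 1) \<or>
         (i' = i \<and> j = k \<and> j' = 1) \<or>
         (1 \<le> i \<and> i \<le> n - 1 \<and> i' = i + 1 \<and> j' = j)))"

definition prism_adj :: "nat \<Rightarrow> nat \<Rightarrow> nat \<times> nat \<Rightarrow> nat \<times> nat \<Rightarrow> bool" where
  "prism_adj k n a b \<longleftrightarrow> prism_edge_dir k n a b \<or> prism_edge_dir k n b a"

end

theory Submission
  imports Defs
begin

definition PP :: "nat \<Rightarrow> nat \<Rightarrow> nat" where
  "PP r j = (if r = 0 then [1,3,7,11,9,5] else if r = 1 then [5,7,11,3,1,9::nat] else [9,11,3,7,5,1]) ! (j - 1)"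

definition QQ :: "nat \<Rightarrow> nat \<Rightarrow> nat" where
  "QQ r x = (if r = 0 then [0,1,0,2,0,6,0,3,0,5,0,4] else if r = 1 then [0,5,0,4,0,1,0,2,0,6,0,3::nat] else [0,6,0,3,0,5,0,4,0,1,0,2]) ! x"

definition lab :: "nat \<times> nat \<Rightarrow> nat" where
  "lab p = 12 * (fst p - 1) + PP ((fst p - 1) mod 3) (snd p)"

definition unlab :: "nat \<Rightarrow> nat \<times> nat" where
  "unlab m = (m div 12 + 1, QQ ((m div 12) mod 3) (m mod 12))"

lemma r3: "(r::nat) < 3 \<Longrightarrow> r = 0 \<or> r = 1 \<or> r = 2" by auto
lemma j6: "(j::nat) \<in> {1..6} \<Longrightarrow> j = 1 \<or> j = 2 \<or> j = 3 \<or> j = 4 \<or> j = 5 \<or> j = 6" by auto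
lemma x12: "(x::nat) < 12 \<Longrightarrow> odd x \<Longrightarrow> x = 1 \<or> x = 3 \<or> x = 5 \<or> x = 7 \<or> x = 9 \<or> x = 11"
  by presburger

lemma PP_facts: "r < 3 \<Longrightarrow> j \<in> {1..6} \<Longrightarrow> odd (PP r j) \<and> PP r j < 12 \<and> QQ r (PP r j) = j"
  by (drule r3, drule j6) (auto simp: PP_def QQ_def)

lemma QQ_facts: "r < 3 \<Longrightarrow> x < 12 \<Longrightarrow> odd x \<Longrightarrow> QQ r x \<in> {1..6} \<and> PP r (QQ r x) = x"
  by (drule r3, drule (1) x12) (auto simp: PP_def QQ_def)

lemma horiz: "r < 3 \<Longrightarrow> j \<in> {1..5} \<Longrightarrow> \<exists>d\<in>{2,4,8,16::nat}. PP r (j+1) = PP r j + d \<or> PP r j = PP r (j+1) + d"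
  by (drule r3, cases "j = 1 \<or> j = 2 \<or> j = 3 \<or> j = 4 \<or> j = 5") (auto simp: PP_def)

lemma wrap: "r < 3 \<Longrightarrow> \<exists>d\<in>{2,4,8,16::nat}. PP r 1 = PP r 6 + d \<or> PP r 6 = PP r 1 + d"
  by (drule r3) (auto simp: PP_def)

lemma vert: "r < 3 \<Longrightarrow> j \<in> {1..6} \<Longrightarrow> \<exists>d\<in>{2,4,8,16::nat}. 12 + PP ((r+1) mod 3) j = PP r j + d"
  by (drule r3, drule j6) (auto simp: PP_def)

lemma gcd_pow2:
  fixes a b d :: nat
  assumes "odd a" "b = a + d" "d \<in> {2,4,8,16}"
  shows "gcd a b = 1"
proof -
  have "coprime a 2" using assms(1) by (simp add: coprime_commute)
  hence c: "coprime a (2^k)" for k by simp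
  have "gcd a b = gcd a d" using assms(2) by (simp add: gcd_add2 add.commute)
  moreover have "d = 2^1 \<or> d = 2^2 \<or> d = 2^3 \<or> d = 2^4" using assms(3) by auto
  ultimately show ?thesis using c by (metis coprime_iff_gcd_eq_1)
qed

lemma gcd_pow2':
  fixes a b d :: nat
  assumes "odd a" "odd b" "b = a + d \<or> a = b + d" "d \<in> {2,4,8,16}"
  shows "gcd a b = 1"
  using assms(3)
proof
  assume "b = a + d" then show ?thesis using gcd_pow2[of a b d] assms by blast
next
  assume "a = b + d" then show ?thesis using gcd_pow2[of b a d] assms by (simp add: gcd.commute)
qed

lemma edge_ok:
  assumes "prism_edge_dir 6 n a b"
  shows "gcd (lab a) (lab b) = 1"
proof -
  obtain i j i' j' where ab: "a = (i,j)" "b = (i',j')" by (cases a, cases b)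
  define r where "r = (i - 1) mod 3"
  have r: "r < 3" by (simp add: r_def)
  have e: "1 \<le> i \<and> i \<le> n \<and> 1 \<le> j \<and> j \<le> 6 \<and>
        ((i' = i \<and> 1 \<le> j \<and> j \<le> 5 \<and> j' = j + 1) \<or>
         (i' = i \<and> j = 6 \<and> j' = 1) \<or>
         (1 \<le> i \<and> i \<le> n - 1 \<and> i' = i + 1 \<and> j' = j))"
    using assms unfolding prism_edge_dir_def ab by auto
  have oa: "odd (lab a)" using PP_facts[OF r, of j] e by (simp add: lab_def ab r_def)
  have ob: "odd (lab b)"
  proof -
    have "(i' - 1) mod 3 < 3" by simp
    moreover have "j' \<in> {1..6}" using e by auto
    ultimately show ?thesis using PP_facts[of "(i' - 1) mod 3" j'] by (simp add: lab_def ab)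
  qed
  from e consider (h) "i' = i" "j \<in> {1..5}" "j' = j + 1" | (w) "i' = i" "j = 6" "j' = 1"
    | (v) "i' = i + 1" "j' = j" "j \<in> {1..6}" "1 \<le> i" by auto
  then show ?thesis
  proof cases
    case h
    then obtain d where "d \<in> {2,4,8,16}" "PP r (j+1) = PP r j + d \<or> PP r j = PP r (j+1) + d"
      using horiz[OF r] by blast
    then show ?thesis using oa ob h
      by (intro gcd_pow2'[of _ _ d]) (auto simp: lab_def ab r_def)
  next
    case w
    then obtain d where "d \<in> {2,4,8,16}" "PP r 1 = PP r 6 + d \<or> PP r 6 = PP r 1 + d"
      using wrap[OF r] by blast
    then show ?thesis using oa ob w
      by (intro gcd_pow2'[of _ _ d]) (auto simp: lab_def ab r_def)
  next
    case v
    then obtain d where d: "d \<in> {2,4,8,16}" "12 + PP ((r+1) mod 3) j = PP r j + d"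
      using vert[OF r] by blast
    have rr: "(i' - 1) mod 3 = (r + 1) mod 3" using v by (simp add: r_def mod_Suc_eq)
    have ii: "12 * (i' - 1) = 12 * (i - 1) + 12" using v by (cases i) auto
    have "lab b = lab a + d" using d rr ii v by (simp add: lab_def ab r_def)
    then show ?thesis using oa ob d by (intro gcd_pow2'[of _ _ d]) auto
  qed
qed

theorem theorem3p8:
  fixes n :: nat
  assumes "n \<ge> 1"
  shows "odd_prime_graph (prism_vertices 6 n) (prism_adj 6 n)"
proof -
  let ?V = "prism_vertices 6 n"
  have card: "card ?V = 6 * n" by (simp add: prism_vertices_def card_cartesian_product)
  have bij: "bij_betw lab ?V {m. odd m \<and> m \<le> 12 * n - 1}"
  proof (rule bij_betw_byWitness[where f' = unlab])
    show "\<forall>a\<in>?V. unlab (lab a) = a"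
    proof
      fix a assume "a \<in> ?V"
      then obtain i j where a: "a = (i,j)" "i \<in> {1..n}" "j \<in> {1..6}" by (auto simp: prism_vertices_def)
      have f: "odd (PP ((i-1) mod 3) j) \<and> PP ((i-1) mod 3) j < 12 \<and> QQ ((i-1) mod 3) (PP ((i-1) mod 3) j) = j"
        using PP_facts[of "(i-1) mod 3" j] a by simp
      then show "unlab (lab a) = a" using a by (simp add: lab_def unlab_def)
    qed
    show "\<forall>m\<in>{m. odd m \<and> m \<le> 12 * n - 1}. lab (unlab m) = m"
    proof
      fix m assume "m \<in> {m. odd m \<and> m \<le> 12 * n - 1}"
      hence "odd (m mod 12)" by (simp add: odd_iff_mod_2_eq_one mod_mod_cancel)
      then have "PP (m div 12 mod 3) (QQ (m div 12 mod 3) (m mod 12)) = m mod 12"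
        using QQ_facts[of "m div 12 mod 3" "m mod 12"] by simp
      then show "lab (unlab m) = m" by (simp add: lab_def unlab_def)
    qed
    show "lab ` ?V \<subseteq> {m. odd m \<and> m \<le> 12 * n - 1}"
    proof
      fix m assume "m \<in> lab ` ?V"
      then obtain i j where a: "m = lab (i,j)" "i \<in> {1..n}" "j \<in> {1..6}" by (auto simp: prism_vertices_def)
      have f: "odd (PP ((i-1) mod 3) j) \<and> PP ((i-1) mod 3) j < 12"
        using PP_facts[of "(i-1) mod 3" j] a by simp
      have le: "12 * (i - 1) + 12 \<le> 12 * n" using a by auto
      have "odd m" using f a by (simp add: lab_def)
      moreover have "m = 12 * (i - 1) + PP ((i-1) mod 3) j" using a by (simp add: lab_def)
      hence "m \<le> 12 * n - 1" using f le by linarith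
      ultimately show "m \<in> {m. odd m \<and> m \<le> 12 * n - 1}" by simp
    qed
    show "unlab ` {m. odd m \<and> m \<le> 12 * n - 1} \<subseteq> ?V"
    proof
      fix p assume "p \<in> unlab ` {m. odd m \<and> m \<le> 12 * n - 1}"
      then obtain m where m: "p = unlab m" "odd m" "m \<le> 12 * n - 1" by auto
      hence "odd (m mod 12)" by (simp add: odd_iff_mod_2_eq_one mod_mod_cancel)
      then have "QQ (m div 12 mod 3) (m mod 12) \<in> {1..6}"
        using QQ_facts[of "m div 12 mod 3" "m mod 12"] by simp
      moreover have "m div 12 + 1 \<le> n" using m(3) assms by linarith
      ultimately show "p \<in> ?V" using m by (simp add: unlab_def prism_vertices_def)
    qed
  qed
  show ?thesis unfolding odd_prime_graph_def card
  proof (intro exI conjI ballI impI)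
    show "bij_betw lab ?V {m. odd m \<and> m \<le> 2 * (6 * n) - 1}" using bij by simp
  next
    fix u v assume "prism_adj 6 n u v"
    then show "gcd (lab u) (lab v) = 1"
      unfolding prism_adj_def using edge_ok[of n u v] edge_ok[of n v u] by (auto simp: gcd.commute)
  qed
qed

end
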